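(* Let $f$ be an invertible $\mathbb F_q$-linearised polynomial over $\mathbb F_{q^h}$ and let $a\in\mathbb F_{q^h}$. Then the map $X\mapsto f(af^{-1}(X))$ is $\mathbb F_{q^h}$-linear (i.e. equals $X\mapsto bX$ for some $b\in\mathbb F_{q^h}$) if and only if $f$ is $\mathbb F_q(a)$-semi-linear.
   Context: An $\mathbb F_q$-linearised polynomial over $\mathbb F_{q^h}$ is $\sum_{l=0}^{h-1}a_lX^{q^l}$ with $a_l\in\mathbb F_{q^h}$, viewed as a map $\mathbb F_{q^h}\to\mathbb F_{q^h}$; invertible means bijective, and $f^{-1}$ denotes the inverse map (again a linearised polynomial). For a subfield $K$ of $\mathbb F_{q^h}$, $f$ is $K$-semi-linear if there is a field automorphism $\sigma$ of $\mathbb F_{q^h}$ with $f(\alpha x)=\alpha^\sigma f(x)$ for all $\alpha\in K$ and $x\in\mathbb F_{q^h}$. *)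

theory Defs
  imports "HOL-Computational_Algebra.Primes"
begin

text \<open>Ambient field F_{q^h} is a finite field type 'a with CARD('a) = q^h.
  The subfield F_q is {x. x^q = x}.\<close>

definition Fq :: "nat \<Rightarrow> 'a::field set" where
  "Fq q = {x. x ^ q = x}"

definition is_subfield :: "'a::field set \<Rightarrow> bool" where
  "is_subfield K \<longleftrightarrow> 0 \<in> K \<and> 1 \<in> K \<and>
     (\<forall>x\<in>K. \<forall>y\<in>K. x + y \<in> K \<and> x * y \<in> K) \<and>
     (\<forall>x\<in>K. - x \<in> K) \<and> (\<forall>x\<in>K. x \<noteq> 0 \<longrightarrow> inverse x \<in> K)"

definition Fq_adj :: "nat \<Rightarrow> 'a::field \<Rightarrow> 'a set" where
  "Fq_adj q a = \<Inter> {K. is_subfield K \<and> Fq q \<subseteq> K \<and> a \<in> K}"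

definition linearised :: "nat \<Rightarrow> nat \<Rightarrow> ('a::field \<Rightarrow> 'a) \<Rightarrow> bool" where
  "linearised q h f \<longleftrightarrow> (\<exists>c :: nat \<Rightarrow> 'a. \<forall>x. f x = (\<Sum>l<h. c l * x ^ (q ^ l)))"

definition field_aut :: "('a::field \<Rightarrow> 'a) \<Rightarrow> bool" where
  "field_aut \<sigma> \<longleftrightarrow> bij \<sigma> \<and> (\<forall>x y. \<sigma> (x + y) = \<sigma> x + \<sigma> y) \<and>
     (\<forall>x y. \<sigma> (x * y) = \<sigma> x * \<sigma> y) \<and> \<sigma> 1 = 1"

definition semilinear :: "'a::field set \<Rightarrow> ('a \<Rightarrow> 'a) \<Rightarrow> bool" where
  "semilinear K f \<longleftrightarrow> (\<exists>\<sigma>. field_aut \<sigma> \<and> (\<forall>\<alpha>\<in>K. \<forall>x. f (\<alpha> * x) = \<sigma> \<alpha> * f x))"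

end

theory Submission imports Defs "HOL-Computational_Algebra.Polynomial" begin

lemma coeff_unique:
  fixes d :: "nat \<Rightarrow> 'a::{field,finite}"
  assumes q2: "q \<ge> 2" and card: "card (UNIV::'a set) = q^h"
    and all: "\<forall>y::'a. (\<Sum>l<h. d l * y^(q^l)) = 0" and k: "k < h"
  shows "d k = 0"
proof -
  define P where "P = (\<Sum>l<h. monom (d l) (q^l))"
  have ev: "poly P y = 0" for y using all by (simp add: P_def poly_sum poly_monom)
  have deg: "degree P \<le> q^(h-1)" unfolding P_def
  proof (rule degree_sum_le)
    fix l assume "l \<in> {..<h}"
    hence "q^l \<le> q^(h-1)" using q2 by (intro power_increasing) auto
    thus "degree (monom (d l) (q^l)) \<le> q^(h-1)" using degree_monom_le order_trans by blast
  qed simp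
  have lt: "q^(h-1) < q^h" using q2 k by (intro power_strict_increasing) auto
  have "P = 0"
  proof (rule ccontr)
    assume "P \<noteq> 0"
    hence "card {x. poly P x = 0} \<le> degree P" by (rule card_poly_roots_bound)
    moreover have "{x. poly P x = 0} = UNIV" using ev by auto
    ultimately show False using card deg lt by simp
  qed
  hence "0 = coeff P (q^k)" by simp
  also have "\<dots> = (\<Sum>l<h. if l = k then d l else 0)"
    unfolding P_def coeff_sum coeff_monom
    by (intro sum.cong refl) (use q2 in \<open>simp add: power_inject_exp\<close>)
  also have "\<dots> = d k" using k by simp
  finally show ?thesis by simp
qed

lemma card_of_nat_zero: "of_nat (card (UNIV :: 'a::{field,finite} set)) = (0::'a)"
proof -
  have "(\<Sum>y\<in>UNIV. y + 1) = (\<Sum>y\<in>(UNIV::'a set). y)"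
  proof (rule sum.reindex_bij_witness[of _ "\<lambda>y. y - 1" "\<lambda>y. y + 1"]) qed auto
  thus ?thesis by (simp add: sum.distrib)
qed

lemma CHAR_dvd_card: "CHAR('a::{field,finite}) dvd card (UNIV :: 'a set)"
  using card_of_nat_zero[where 'a='a] of_nat_eq_0_iff_char_dvd by blast

lemma char_eq:
  assumes "prime p" and "card (UNIV :: 'a::{field,finite} set) = p ^ n"
  shows "CHAR('a) = p"
proof -
  have pos: "CHAR('a) > 0" by (rule finite_imp_CHAR_pos) simp
  hence pr: "prime CHAR('a)" by (rule prime_CHAR_semidom)
  have "CHAR('a) dvd p ^ n" using CHAR_dvd_card[where 'a='a] assms(2) by simp
  hence "CHAR('a) dvd p" using pr prime_dvd_power by blast
  thus ?thesis using pr assms(1) primes_dvd_imp_eq by blast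
qed
theorem lemma5p6:
  fixes f :: "'a::{field,finite} \<Rightarrow> 'a" and a :: 'a and q h :: nat
  assumes "\<exists>p e. prime p \<and> e > 0 \<and> q = p ^ e"
    and "h > 0"
    and "card (UNIV :: 'a set) = q ^ h"
    and "linearised q h f"
    and "bij f"
  shows "(\<exists>b. \<forall>x. f (a * inv f x) = b * x) \<longleftrightarrow> semilinear (Fq_adj q a) f"
proof
  assume "semilinear (Fq_adj q a) f"
  then obtain \<sigma> where s: "\<forall>\<alpha>\<in>Fq_adj q a. \<forall>x. f (\<alpha> * x) = \<sigma> \<alpha> * f x"
    unfolding semilinear_def by blast
  have "a \<in> Fq_adj q a" unfolding Fq_adj_def by blast
  hence "f (a * inv f x) = \<sigma> a * x" for x
    using s assms(5) by (simp add: bij_is_surj surj_f_inv_f)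
  thus "\<exists>b. \<forall>x. f (a * inv f x) = b * x" by blast
next
  assume "\<exists>b. \<forall>x. f (a * inv f x) = b * x"
  then obtain b where hb: "\<forall>x. f (a * inv f x) = b * x" by blast
  obtain p e where pe: "prime p" "e > 0" "q = p ^ e" using assms(1) by blast
  obtain c :: "nat \<Rightarrow> 'a" where c: "\<forall>x. f x = (\<Sum>l<h. c l * x ^ (q ^ l))"
    using assms(4) unfolding linearised_def by blast
  have q2: "q \<ge> 2" using pe prime_ge_2_nat
    by (metis One_nat_def Suc_1 Suc_le_eq less_le_trans nat_less_le one_less_power power_one_right)
  have card': "card (UNIV :: 'a set) = p ^ (e * h)" using assms(3) pe by (simp add: power_mult)
  have CH: "CHAR('a) = p" by (rule char_eq[OF pe(1) card'])
  have prCH: "prime CHAR('a)" using CH pe by simp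
  have fd: "(x + y) ^ (q ^ l) = x ^ (q ^ l) + y ^ (q ^ l)" for x y :: 'a and l
    by (rule freshmans_dream'[OF prCH, where n="e*l"]) (simp add: CH pe power_mult)
  have qpos0: "q ^ l \<noteq> 0" for l using q2 by simp
  have fneg: "(- x) ^ (q ^ l) = - (x ^ (q ^ l))" for x :: 'a and l
  proof -
    have "(- x) ^ (q ^ l) + x ^ (q ^ l) = 0"
      proof -
        have "(- x + x) ^ (q ^ l) = 0" using qpos0[of l] by simp
        thus ?thesis by (simp only: fd)
      qed
    thus ?thesis by (simp add: eq_neg_iff_add_eq_0)
  qed
  have fy: "f (a * y) = b * f y" for y
    using hb[rule_format, of "f y"] assms(5) by (simp add: bij_is_inj)
  have dz: "\<forall>y::'a. (\<Sum>l<h. (c l * a ^ (q ^ l) - b * c l) * y ^ (q ^ l)) = 0"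
  proof
    fix y :: 'a
    have "(\<Sum>l<h. (c l * a ^ (q ^ l) - b * c l) * y ^ (q ^ l))
        = (\<Sum>l<h. c l * (a * y) ^ (q ^ l)) - b * (\<Sum>l<h. c l * y ^ (q ^ l))"
      by (simp add: sum_distrib_left sum_subtractf algebra_simps power_mult_distrib)
    also have "\<dots> = 0" using fy[of y] c by simp
    finally show "(\<Sum>l<h. (c l * a ^ (q ^ l) - b * c l) * y ^ (q ^ l)) = 0" .
  qed
  have cl: "c l \<noteq> 0 \<Longrightarrow> a ^ (q ^ l) = b" if "l < h" for l
    using coeff_unique[OF q2 assms(3) dz that] by simp
  obtain l0 where l0: "l0 < h" "c l0 \<noteq> 0"
  proof (rule ccontr)
    assume "\<not> thesis"
    hence "\<forall>l<h. c l = 0" using that by blast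
    hence "f x = 0" for x using c by simp
    hence "f 0 = f 1" by simp
    thus False using assms(5) by (simp add: bij_is_inj inj_eq)
  qed
  define m where "m = q ^ l0"
  define \<sigma> where "\<sigma> = (\<lambda>x::'a. x ^ m)"
  define T where "T = {\<alpha>::'a. \<forall>l<h. c l \<noteq> 0 \<longrightarrow> \<alpha> ^ (q ^ l) = \<alpha> ^ m}"
  have qpos: "q ^ l > 0" for l using q2 by simp
  have Tsub: "is_subfield T"
    unfolding is_subfield_def T_def
    using q2 by (auto simp: fd fneg power_mult_distrib power_inverse m_def power_0_left)
  have FqT: "Fq q \<subseteq> T"
  proof
    fix \<alpha> :: 'a assume "\<alpha> \<in> Fq q"
    hence aq: "\<alpha> ^ q = \<alpha>" by (simp add: Fq_def)
    have "\<alpha> ^ (q ^ l) = \<alpha>" for l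
    proof (induction l)
      case (Suc l)
      have "\<alpha> ^ (q ^ Suc l) = (\<alpha> ^ (q ^ l)) ^ q" by (simp add: power_mult[symmetric] power_Suc2 mult.commute)
      thus ?case using Suc aq by simp
    qed simp
    thus "\<alpha> \<in> T" by (simp add: T_def m_def)
  qed
  have aT: "a \<in> T" using cl l0 by (auto simp: T_def m_def)
  have adjT: "Fq_adj q a \<subseteq> T" unfolding Fq_adj_def using Tsub FqT aT by blast
  have sadd: "\<sigma> (x + y) = \<sigma> x + \<sigma> y" for x y unfolding \<sigma>_def m_def by (rule fd)
  have "inj \<sigma>"
  proof (rule injI)
    fix x y assume "\<sigma> x = \<sigma> y"
    moreover have "\<sigma> (x - y) + \<sigma> y = \<sigma> x" using sadd[of "x - y" y] by simp
    ultimately have "\<sigma> (x - y) = 0" by simp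
    thus "x = y" by (simp add: \<sigma>_def)
  qed
  hence "bij \<sigma>" by (simp add: bij_def finite_UNIV_inj_surj)
  hence aut: "field_aut \<sigma>" unfolding field_aut_def using sadd
    by (simp add: \<sigma>_def power_mult_distrib)
  have "f (\<alpha> * x) = \<sigma> \<alpha> * f x" if "\<alpha> \<in> Fq_adj q a" for \<alpha> x
  proof -
    have aT: "\<alpha> \<in> T" using that adjT by blast
    have "f (\<alpha> * x) = (\<Sum>l<h. c l * (\<alpha> * x) ^ (q ^ l))" using c by simp
    also have "\<dots> = (\<Sum>l<h. \<sigma> \<alpha> * (c l * x ^ (q ^ l)))"
    proof (rule sum.cong[OF refl])
      fix l assume "l \<in> {..<h}"
      thus "c l * (\<alpha> * x) ^ (q ^ l) = \<sigma> \<alpha> * (c l * x ^ (q ^ l))"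
        using aT by (cases "c l = 0") (auto simp: T_def \<sigma>_def power_mult_distrib)
    qed
    also have "\<dots> = \<sigma> \<alpha> * f x" using c by (simp add: sum_distrib_left)
    finally show ?thesis .
  qed
  thus "semilinear (Fq_adj q a) f" unfolding semilinear_def using aut by blast
qed

end
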